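(* Consider any instance $\mathcal{I}$ of the online volunteer notification problem whose inter-activity time distribution has minimum discrete hazard rate $q$. Then the scaled-down notification (SDN) policy is $\frac{1}{2-q}\left(1-\frac{1}{e}\right)$-competitive, i.e., $\mathbf{POL}_{\mathcal{I}}\ge\frac{1}{2-q}\left(1-\frac1e\right)\mathbf{LP}_{\mathcal{I}}$ for every such instance, where $\mathbf{POL}_{\mathcal{I}}$ is the SDN policy's expected number of completed tasks.
   Context: Online volunteer notification problem. An instance $\mathcal{I}$ consists of volunteers $[V]$, task types $[S]$, horizon $T$, arrival probabilities $\lambda_{s,t}\ge0$ with $\sum_{s=1}^S\lambda_{s,t}\le1$, match probabilities $p_{v,s}\in[0,1]$, and a probability mass function $g$ on the positive integers with CDF $G(\tau)=\sum_{i\le\tau}g(i)$, $G(0)=0$. In each period $t$ at most one task arrives, of type $s$ with probability $\lambda_{s,t}$, independently across periods. All volunteers start active. Upon an arrival the platform immediately and irrevocably notifies a subset of volunteers; each notified active volunteer $v$ responds positively independently with probability $p_{v,s}$, and the task is completed iff at least one does. A volunteer who is active and notified at time $t$ becomes inactive (regardless of response) and becomes active again at time $t+Z$, $Z\sim g$ independent; inactive volunteers ignore notifications and are unaffected by them. The platform knows $\lambda,p,g$ but not states. MDHR: $q=\min_{\tau\in\mathbb{N}}\frac{g(\tau)}{1-G(\tau-1)}$ (with $\frac00:=1$). $\mathcal{P}$: set of $\mathbf{x}\in\mathbb{R}^{V\times S\times T}$ with $0\le x_{v,s,t}\le1$ and $\sum_{\tau=1}^t\sum_{s}\lambda_{s,\tau}x_{v,s,\tau}(1-G(t-\tau))\le1$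 for all $v,t$. $\mathbf{LP}_{\mathcal{I}}=\max_{\mathbf{x}\in\mathcal{P}}\sum_{t,s}\lambda_{s,t}\min\{\sum_v x_{v,s,t}p_{v,s},1\}$. A policy is $c$-competitive if $\mathbf{POL}_{\mathcal{I}}\ge c\,\mathbf{LP}_{\mathcal{I}}$ for all instances. Ex ante solution: $f(\mathbf{x})=\sum_{t,s}\lambda_{s,t}\big(1-\prod_{v}(1-x_{v,s,t}p_{v,s})\big)$; $\mathbf{x}^*_{LP}$ an optimal solution of $\mathbf{LP}_{\mathcal{I}}$; $\mathbf{x}^*_{AA}$ the output of: $\mathbf{x}^0=\mathbf{0}$, for $i=1..m$ (some $m\in\mathbb{N}$) $\mathbf{y}^i\in\arg\max_{\mathbf{x}\in\mathcal{P}}\langle\mathbf{x},\nabla f(\mathbf{x}^{i-1})\rangle$, $\mathbf{x}^i=\mathbf{x}^{i-1}+\mathbf{y}^i/m$, output $\mathbf{x}^m$; $\mathbf{x}^*_{SQ}$ built for $v=1,\dots,V$ in order, $(x^{SQ}_{v,s,t})_{s,t}$ optimal for $\max\sum_{t,s}\lambda_{s,t}\prod_{u<v}(1-p_{u,s}x^{SQ}_{u,s,t})p_{v,s}x_{v,s,t}$ s.t. $0\le x_{v,s,t}\le1$, $\sum_{\tau\le t}\sum_s\lambda_{s,\tau}x_{v,s,\tau}(1-G(t-\tau))\le1$ for all $t$; $\mathbf{x}^*\in\arg\max_{\mathbf{x}\in\{\mathbf{x}^*_{LP},\mathbf{x}^*_{AA},\mathbf{x}^*_{SQ}\}}f(\mathbf{x})$.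 SDN policy: set $\beta_{v,1}=1$ and $\beta_{v,t}=1-\sum_{t'=1}^{t-1}\sum_{s=1}^S\lambda_{s,t'}\frac{x^*_{v,s,t'}}{2-q}(1-G(t-t'))$ for $t\ge2$; when a task of type $s$ arrives at time $t$, notify each volunteer $v$ independently with probability $\frac{x^*_{v,s,t}}{(2-q)\beta_{v,t}}$. *)

theory Defs
  imports "HOL-Probability.Probability"
begin

(* Conventions: volunteers v \<in> {..<V}, task types s \<in> {..<S}, periods t \<in> {1..T}.
   lam s t = \<lambda>_{s,t}, p v s = p_{v,s}, g :: nat pmf is the inter-activity distribution
   (supported on the positive integers: pmf g 0 = 0).
   A vector x \<in> R^{V\<times>S\<times>T} is a function x v s t, required to vanish outside the index range. *)

definition Gcdf :: "nat pmf \<Rightarrow> nat \<Rightarrow> real" where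
  "Gcdf g \<tau> = (\<Sum>i\<in>{1..\<tau>}. pmf g i)"

definition hazard :: "nat pmf \<Rightarrow> nat \<Rightarrow> real" where
  "hazard g \<tau> = (if pmf g \<tau> = 0 \<and> 1 - Gcdf g (\<tau> - 1) = 0 then 1
                 else pmf g \<tau> / (1 - Gcdf g (\<tau> - 1)))"

definition mdhr :: "nat pmf \<Rightarrow> real" where
  "mdhr g = (INF \<tau>\<in>{1..}. hazard g \<tau>)"

definition feas1 :: "nat \<Rightarrow> nat \<Rightarrow> (nat \<Rightarrow> nat \<Rightarrow> real) \<Rightarrow> nat pmf \<Rightarrow> (nat \<Rightarrow> nat \<Rightarrow> real) \<Rightarrow> bool" where
  "feas1 S T lam g y \<longleftrightarrow>
     (\<forall>s t. s < S \<and> t \<in> {1..T} \<longrightarrow> 0 \<le> y s t \<and> y s t \<le> 1) \<and>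
     (\<forall>s t. \<not> (s < S \<and> t \<in> {1..T}) \<longrightarrow> y s t = 0) \<and>
     (\<forall>t\<in>{1..T}. (\<Sum>\<tau>=1..t. \<Sum>s<S. lam s \<tau> * y s \<tau> * (1 - Gcdf g (t - \<tau>))) \<le> 1)"

definition feasP :: "nat \<Rightarrow> nat \<Rightarrow> nat \<Rightarrow> (nat \<Rightarrow> nat \<Rightarrow> real) \<Rightarrow> nat pmf \<Rightarrow> (nat \<Rightarrow> nat \<Rightarrow> nat \<Rightarrow> real) set" where
  "feasP V S T lam g = {x. (\<forall>v<V. feas1 S T lam g (x v)) \<and> (\<forall>v. V \<le> v \<longrightarrow> x v = (\<lambda>s t. 0))}"

definition LPobj :: "nat \<Rightarrow> nat \<Rightarrow> nat \<Rightarrow> (nat \<Rightarrow> nat \<Rightarrow> real) \<Rightarrow> (nat \<Rightarrow> nat \<Rightarrow> real) \<Rightarrow> (nat \<Rightarrow> nat \<Rightarrow> nat \<Rightarrow> real) \<Rightarrow> real" where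
  "LPobj V S T lam p x = (\<Sum>t=1..T. \<Sum>s<S. lam s t * min (\<Sum>v<V. x v s t * p v s) 1)"

definition LPval :: "nat \<Rightarrow> nat \<Rightarrow> nat \<Rightarrow> (nat \<Rightarrow> nat \<Rightarrow> real) \<Rightarrow> (nat \<Rightarrow> nat \<Rightarrow> real) \<Rightarrow> nat pmf \<Rightarrow> real" where
  "LPval V S T lam p g = Sup (LPobj V S T lam p ` feasP V S T lam g)"

definition fobj :: "nat \<Rightarrow> nat \<Rightarrow> nat \<Rightarrow> (nat \<Rightarrow> nat \<Rightarrow> real) \<Rightarrow> (nat \<Rightarrow> nat \<Rightarrow> real) \<Rightarrow> (nat \<Rightarrow> nat \<Rightarrow> nat \<Rightarrow> real) \<Rightarrow> real" where
  "fobj V S T lam p x = (\<Sum>t=1..T. \<Sum>s<S. lam s t * (1 - (\<Prod>v<V. 1 - x v s t * p v s)))"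

(* gradient of f (partial derivatives written out; f does not depend on coordinates outside the range) *)
definition gradf :: "nat \<Rightarrow> nat \<Rightarrow> nat \<Rightarrow> (nat \<Rightarrow> nat \<Rightarrow> real) \<Rightarrow> (nat \<Rightarrow> nat \<Rightarrow> real) \<Rightarrow> (nat \<Rightarrow> nat \<Rightarrow> nat \<Rightarrow> real) \<Rightarrow> (nat \<Rightarrow> nat \<Rightarrow> nat \<Rightarrow> real)" where
  "gradf V S T lam p x = (\<lambda>v s t. if v < V \<and> s < S \<and> t \<in> {1..T}
       then lam s t * p v s * (\<Prod>u\<in>{..<V} - {v}. 1 - x u s t * p u s) else 0)"

definition innerp :: "nat \<Rightarrow> nat \<Rightarrow> nat \<Rightarrow> (nat \<Rightarrow> nat \<Rightarrow> nat \<Rightarrow> real) \<Rightarrow> (nat \<Rightarrow> nat \<Rightarrow> nat \<Rightarrow> real) \<Rightarrow> real" where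
  "innerp V S T x y = (\<Sum>v<V. \<Sum>s<S. \<Sum>t=1..T. x v s t * y v s t)"

definition is_LP_opt :: "nat \<Rightarrow> nat \<Rightarrow> nat \<Rightarrow> (nat \<Rightarrow> nat \<Rightarrow> real) \<Rightarrow> (nat \<Rightarrow> nat \<Rightarrow> real) \<Rightarrow> nat pmf \<Rightarrow> (nat \<Rightarrow> nat \<Rightarrow> nat \<Rightarrow> real) \<Rightarrow> bool" where
  "is_LP_opt V S T lam p g x \<longleftrightarrow> x \<in> feasP V S T lam g \<and>
     (\<forall>y\<in>feasP V S T lam g. LPobj V S T lam p y \<le> LPobj V S T lam p x)"

(* x is a possible output of the continuous-greedy-type algorithm AA for some m \<ge> 1 *)
definition is_AA_output :: "nat \<Rightarrow> nat \<Rightarrow> nat \<Rightarrow> (nat \<Rightarrow> nat \<Rightarrow> real) \<Rightarrow> (nat \<Rightarrow> nat \<Rightarrow> real) \<Rightarrow> nat pmf \<Rightarrow> (nat \<Rightarrow> nat \<Rightarrow> nat \<Rightarrow> real) \<Rightarrow> bool" where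
  "is_AA_output V S T lam p g x \<longleftrightarrow>
     (\<exists>m::nat. 1 \<le> m \<and> (\<exists>xs :: nat \<Rightarrow> nat \<Rightarrow> nat \<Rightarrow> nat \<Rightarrow> real.
        xs 0 = (\<lambda>v s t. 0) \<and>
        (\<forall>i\<in>{1..m}. \<exists>y\<in>feasP V S T lam g.
            (\<forall>z\<in>feasP V S T lam g. innerp V S T z (gradf V S T lam p (xs (i - 1)))
                                    \<le> innerp V S T y (gradf V S T lam p (xs (i - 1)))) \<and>
            xs i = (\<lambda>v s t. xs (i - 1) v s t + y v s t / real m)) \<and>
        x = xs m))"

definition sqobj :: "nat \<Rightarrow> nat \<Rightarrow> (nat \<Rightarrow> nat \<Rightarrow> real) \<Rightarrow> (nat \<Rightarrow> nat \<Rightarrow> real) \<Rightarrow> (nat \<Rightarrow> nat \<Rightarrow> nat \<Rightarrow> real) \<Rightarrow> nat \<Rightarrow> (nat \<Rightarrow> nat \<Rightarrow> real) \<Rightarrow> real" where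
  "sqobj S T lam p x v y = (\<Sum>t=1..T. \<Sum>s<S. lam s t * (\<Prod>u<v. 1 - p u s * x u s t) * p v s * y s t)"

definition is_SQ :: "nat \<Rightarrow> nat \<Rightarrow> nat \<Rightarrow> (nat \<Rightarrow> nat \<Rightarrow> real) \<Rightarrow> (nat \<Rightarrow> nat \<Rightarrow> real) \<Rightarrow> nat pmf \<Rightarrow> (nat \<Rightarrow> nat \<Rightarrow> nat \<Rightarrow> real) \<Rightarrow> bool" where
  "is_SQ V S T lam p g x \<longleftrightarrow>
     (\<forall>v<V. feas1 S T lam g (x v) \<and>
        (\<forall>y. feas1 S T lam g y \<longrightarrow> sqobj S T lam p x v y \<le> sqobj S T lam p x v (x v))) \<and>
     (\<forall>v. V \<le> v \<longrightarrow> x v = (\<lambda>s t. 0))"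

definition beta :: "nat \<Rightarrow> (nat \<Rightarrow> nat \<Rightarrow> real) \<Rightarrow> nat pmf \<Rightarrow> (nat \<Rightarrow> nat \<Rightarrow> nat \<Rightarrow> real) \<Rightarrow> nat \<Rightarrow> nat \<Rightarrow> real" where
  "beta S lam g x v t = 1 - (\<Sum>t'=1..t-1. \<Sum>s<S. lam s t' * (x v s t' / (2 - mdhr g)) * (1 - Gcdf g (t - t')))"

definition notif_prob :: "nat \<Rightarrow> (nat \<Rightarrow> nat \<Rightarrow> real) \<Rightarrow> nat pmf \<Rightarrow> (nat \<Rightarrow> nat \<Rightarrow> nat \<Rightarrow> real) \<Rightarrow> nat \<Rightarrow> nat \<Rightarrow> nat \<Rightarrow> real" where
  "notif_prob S lam g x v s t = x v s t / ((2 - mdhr g) * beta S lam g x v t)"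

(* arrival at period t: None = no task, Some s = task of type s *)
definition arrival :: "nat \<Rightarrow> (nat \<Rightarrow> nat \<Rightarrow> real) \<Rightarrow> nat \<Rightarrow> nat option pmf" where
  "arrival S lam t = embed_pmf (\<lambda>a. case a of None \<Rightarrow> 1 - (\<Sum>s<S. lam s t)
                                          | Some s \<Rightarrow> (if s < S then lam s t else 0))"

(* per-volunteer independent randomness: (notified, would respond positively, inter-activity time Z) *)
definition vol_outcome :: "real \<Rightarrow> real \<Rightarrow> nat pmf \<Rightarrow> (bool \<times> bool \<times> nat) pmf" where
  "vol_outcome pn pr g =
     bind_pmf (bernoulli_pmf pn) (\<lambda>n. bind_pmf (bernoulli_pmf pr) (\<lambda>a. map_pmf (\<lambda>z. (n, a, z)) g))"

(* State: (r, c) where volunteer v is active at period t iff r v \<le> t, and c counts completed tasks. *)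
definition sdn_step :: "nat \<Rightarrow> nat \<Rightarrow> (nat \<Rightarrow> nat \<Rightarrow> real) \<Rightarrow> (nat \<Rightarrow> nat \<Rightarrow> real) \<Rightarrow> nat pmf
    \<Rightarrow> (nat \<Rightarrow> nat \<Rightarrow> nat \<Rightarrow> real) \<Rightarrow> nat \<Rightarrow> (nat \<Rightarrow> nat) \<times> nat \<Rightarrow> ((nat \<Rightarrow> nat) \<times> nat) pmf" where
  "sdn_step V S lam p g x t rc = (case rc of (r, c) \<Rightarrow>
     bind_pmf (arrival S lam t) (\<lambda>a. case a of
        None \<Rightarrow> return_pmf (r, c)
      | Some s \<Rightarrow> map_pmf (\<lambda>\<omega>.
           (\<lambda>v. if v < V \<and> r v \<le> t \<and> fst (\<omega> v) then t + snd (snd (\<omega> v)) else r v,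
            c + (if \<exists>v<V. r v \<le> t \<and> fst (\<omega> v) \<and> fst (snd (\<omega> v)) then 1 else 0)))
          (Pi_pmf {..<V} (False, False, 0) (\<lambda>v. vol_outcome (notif_prob S lam g x v s t) (p v s) g))))"

primrec sdn_run :: "nat \<Rightarrow> nat \<Rightarrow> (nat \<Rightarrow> nat \<Rightarrow> real) \<Rightarrow> (nat \<Rightarrow> nat \<Rightarrow> real) \<Rightarrow> nat pmf
    \<Rightarrow> (nat \<Rightarrow> nat \<Rightarrow> nat \<Rightarrow> real) \<Rightarrow> nat \<Rightarrow> ((nat \<Rightarrow> nat) \<times> nat) pmf" where
  "sdn_run V S lam p g x 0 = return_pmf (\<lambda>v. 0, 0)"
| "sdn_run V S lam p g x (Suc t) = bind_pmf (sdn_run V S lam p g x t) (sdn_step V S lam p g x (Suc t))"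

definition SDN_value :: "nat \<Rightarrow> nat \<Rightarrow> nat \<Rightarrow> (nat \<Rightarrow> nat \<Rightarrow> real) \<Rightarrow> (nat \<Rightarrow> nat \<Rightarrow> real) \<Rightarrow> nat pmf
    \<Rightarrow> (nat \<Rightarrow> nat \<Rightarrow> nat \<Rightarrow> real) \<Rightarrow> real" where
  "SDN_value V S T lam p g x = measure_pmf.expectation (sdn_run V S lam p g x T) (\<lambda>rc. real (snd rc))"

end

theory Submission
  imports Defs
begin

lemma exp_bind_pmf:
  fixes f :: "'b \<Rightarrow> real"
  assumes bnd: "\<And>y. y \<in> set_pmf (bind_pmf M N) \<Longrightarrow> \<bar>f y\<bar> \<le> B"
  shows "measure_pmf.expectation (bind_pmf M N) f =
         measure_pmf.expectation M (\<lambda>x. measure_pmf.expectation (N x) f)"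
proof -
  define h where "h = (\<lambda>y. max (-\<bar>B\<bar>) (min \<bar>B\<bar> (f y)))"
  have hb: "\<And>y. \<bar>h y\<bar> \<le> \<bar>B\<bar>" unfolding h_def by auto
  have fh: "\<And>y. y \<in> set_pmf (bind_pmf M N) \<Longrightarrow> f y = h y"
    using bnd unfolding h_def by (smt (verit))
  have "measure_pmf.expectation (bind_pmf M N) f = measure_pmf.expectation (bind_pmf M N) h"
    by (intro integral_cong_AE) (auto simp: AE_measure_pmf_iff fh)
  also have "\<dots> = measure_pmf.expectation M (\<lambda>x. measure_pmf.expectation (N x) h)"
    unfolding measure_pmf_bind
    by (rule integral_bind[where K="count_space UNIV" and B="\<bar>B\<bar>" and B'=1])
       (auto simp: hb measure_pmf_in_subprob_algebra)
  also have "\<dots> = measure_pmf.expectation M (\<lambda>x. measure_pmf.expectation (N x) f)"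
    apply (intro integral_cong_AE)
      apply (auto simp: AE_measure_pmf_iff)
    apply (intro integral_cong_AE)
      apply (auto simp: AE_measure_pmf_iff)
    using fh by fastforce
  finally show ?thesis .
qed

lemma Gcdf_0[simp]: "Gcdf g 0 = 0" by (simp add: Gcdf_def)
lemma Gcdf_Suc: "Gcdf g (Suc k) = Gcdf g k + pmf g (Suc k)"
  by (simp add: Gcdf_def)
lemma Gcdf_meas: "Gcdf g k = measure_pmf.prob g {1..k}"
  by (simp add: Gcdf_def measure_measure_pmf_finite)
lemma Gcdf_le1: "Gcdf g k \<le> 1"
  unfolding Gcdf_meas by simp
lemma Gcdf_nonneg: "0 \<le> Gcdf g k"
  unfolding Gcdf_meas by simp
lemma Gcdf_tail:
  assumes "pmf g 0 = 0"
  shows "measure_pmf.prob g {z. j < z} = 1 - Gcdf g j"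
proof -
  have "measure_pmf.prob g {z. j < z} = 1 - measure_pmf.prob g {..j}"
    by (subst measure_pmf.prob_compl[symmetric]) (auto intro!: arg_cong[where f="measure_pmf.prob g"])
  also have "measure_pmf.prob g {..j} = measure_pmf.prob g {1..j}"
    apply (rule measure_prob_cong_0)
     apply (auto simp: set_pmf_eq)
    subgoal for x using assms by (cases x) auto
    done
  finally show ?thesis by (simp add: Gcdf_meas)
qed

lemma hazard_nonneg: "0 \<le> hazard g t"
  unfolding hazard_def using Gcdf_le1[of g "t-1"] by auto

lemma mdhr_le: "1 \<le> t \<Longrightarrow> mdhr g \<le> hazard g t"
  unfolding mdhr_def
  by (rule cINF_lower) (auto intro: bdd_belowI2[where m=0] hazard_nonneg)

lemma mdhr_nonneg: "0 \<le> mdhr g"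
  unfolding mdhr_def by (rule cINF_greatest) (auto simp: hazard_nonneg)

lemma mdhr_le1: "mdhr g \<le> 1"
proof -
  have "hazard g 1 = pmf g 1" unfolding hazard_def by auto
  also have "\<dots> \<le> 1" by (rule pmf_le_1)
  finally show ?thesis using mdhr_le[of 1 g] by simp
qed

lemma hazard_step:
  assumes "1 \<le> k"
  shows "1 - Gcdf g k \<le> (1 - mdhr g) * (1 - Gcdf g (k - 1))"
proof -
  obtain j where k: "k = Suc j" using assms by (cases k) auto
  have G: "Gcdf g k = Gcdf g j + pmf g k" using k Gcdf_Suc by simp
  have le1: "Gcdf g k \<le> 1" by (rule Gcdf_le1)
  show ?thesis
  proof (cases "1 - Gcdf g j = 0")
    case True
    then have "pmf g k = 0" using G le1 pmf_nonneg[of g k] by linarith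
    then show ?thesis using True G k by simp
  next
    case False
    then have pos: "0 < 1 - Gcdf g j" using Gcdf_le1[of g j] by linarith
    have h: "hazard g k = pmf g k / (1 - Gcdf g j)"
      unfolding hazard_def using False k by simp
    have "mdhr g \<le> pmf g k / (1 - Gcdf g j)" using mdhr_le[OF assms, of g] h by simp
    then have "mdhr g * (1 - Gcdf g j) \<le> pmf g k" using pos by (simp add: field_simps)
    then show ?thesis using G k by (simp add: algebra_simps)
  qed
qed

locale inst =
  fixes V S T :: nat and lam p :: "nat \<Rightarrow> nat \<Rightarrow> real" and g :: "nat pmf"
    and x :: "nat \<Rightarrow> nat \<Rightarrow> nat \<Rightarrow> real"
  assumes lam_nonneg: "\<forall>s<S. \<forall>t\<in>{1..T}. 0 \<le> lam s t"
    and lam_sum: "\<forall>t\<in>{1..T}. (\<Sum>s<S. lam s t) \<le> 1"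
    and p_range: "\<forall>v<V. \<forall>s<S. 0 \<le> p v s \<and> p v s \<le> 1"
    and g_pos: "pmf g 0 = 0"
    and xfeas: "x \<in> feasP V S T lam g"
begin

abbreviation "q \<equiv> mdhr g"
abbreviation "\<kappa> \<equiv> 2 - mdhr g"

lemma kappa_ge1: "1 \<le> \<kappa>" using mdhr_le1[of g] by simp
lemma kappa_le2: "\<kappa> \<le> 2" using mdhr_nonneg[of g] by simp

lemma feas_v: "v < V \<Longrightarrow> feas1 S T lam g (x v)"
  using xfeas by (auto simp: feasP_def)

lemma x_out: "V \<le> v \<Longrightarrow> x v s t = 0"
  using xfeas by (auto simp: feasP_def)

lemma x_range: "v < V \<Longrightarrow> 0 \<le> x v s t \<and> x v s t \<le> 1"
  using feas_v[of v] unfolding feas1_def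
  by (cases "s < S \<and> t \<in> {1..T}") auto

lemma x_zero: "v < V \<Longrightarrow> \<not> (s < S \<and> t \<in> {1..T}) \<Longrightarrow> x v s t = 0"
  using feas_v[of v] unfolding feas1_def by auto

lemma x_cons: "v < V \<Longrightarrow> t \<in> {1..T} \<Longrightarrow>
   (\<Sum>\<tau>=1..t. \<Sum>s<S. lam s \<tau> * x v s \<tau> * (1 - Gcdf g (t - \<tau>))) \<le> 1"
  using feas_v[of v] unfolding feas1_def by auto

lemma lamx_nonneg: "v < V \<Longrightarrow> s < S \<Longrightarrow> \<tau> \<in> {1..T} \<Longrightarrow> 0 \<le> lam s \<tau> * x v s \<tau>"
  using lam_nonneg x_range[of v s \<tau>] by auto

definition W :: "nat \<Rightarrow> nat \<Rightarrow> real" where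
  "W v t = (\<Sum>\<tau>=1..t-1. \<Sum>s<S. lam s \<tau> * x v s \<tau> * (1 - Gcdf g (t - \<tau>)))"

lemma beta_W: "beta S lam g x v t = 1 - W v t / \<kappa>"
  unfolding beta_def W_def by (simp add: sum_divide_distrib)

lemma W_nonneg: "v < V \<Longrightarrow> t \<le> Suc T \<Longrightarrow> 0 \<le> W v t"
  unfolding W_def
  by (intro sum_nonneg mult_nonneg_nonneg lamx_nonneg) (auto simp: Gcdf_le1)

lemma W_le: assumes v: "v < V" and t: "t \<in> {1..T}" shows "W v t \<le> 1 - q"
proof (cases "t = 1")
  case True then show ?thesis using mdhr_le1[of g] by (simp add: W_def)
next
  case False
  then have t1: "t - 1 \<in> {1..T}" using t by auto
  have "W v t \<le> (\<Sum>\<tau>=1..t-1. \<Sum>s<S. (1 - q) * (lam s \<tau> * x v s \<tau> * (1 - Gcdf g (t - 1 - \<tau>))))"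
    unfolding W_def
  proof (intro sum_mono)
    fix \<tau> s assume \<tau>: "\<tau> \<in> {1..t-1}" and s: "s \<in> {..<S}"
    have nn: "0 \<le> lam s \<tau> * x v s \<tau>" using lamx_nonneg[of v s \<tau>] v s \<tau> t by auto
    have "1 - Gcdf g (t - \<tau>) \<le> (1 - q) * (1 - Gcdf g (t - \<tau> - 1))"
      using hazard_step[of "t - \<tau>" g] \<tau> by auto
    then have "lam s \<tau> * x v s \<tau> * (1 - Gcdf g (t - \<tau>)) \<le> lam s \<tau> * x v s \<tau> * ((1 - q) * (1 - Gcdf g (t - \<tau> - 1)))"
      using nn by (rule mult_left_mono)
    moreover have "t - \<tau> - 1 = t - 1 - \<tau>" by simp
    ultimately show "lam s \<tau> * x v s \<tau> * (1 - Gcdf g (t - \<tau>)) \<le> (1 - q) * (lam s \<tau> * x v s \<tau> * (1 - Gcdf g (t - 1 - \<tau>)))"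
      by (simp add: algebra_simps)
  qed
  also have "\<dots> = (1 - q) * (\<Sum>\<tau>=1..t-1. \<Sum>s<S. lam s \<tau> * x v s \<tau> * (1 - Gcdf g (t - 1 - \<tau>)))"
    by (simp add: sum_distrib_left)
  also have "\<dots> \<le> (1 - q) * 1"
    using x_cons[OF v t1] mdhr_le1[of g] by (intro mult_left_mono) auto
  finally show ?thesis by simp
qed

lemma beta_ge: assumes "v < V" "t \<in> {1..T}" shows "1 / \<kappa> \<le> beta S lam g x v t"
proof -
  have "W v t / \<kappa> \<le> (1 - q) / \<kappa>" using W_le[OF assms] kappa_ge1
    by (intro divide_right_mono) auto
  moreover have "1 - (1 - q) / \<kappa> = 1 / \<kappa>" using kappa_ge1 by (simp add: field_simps)
  ultimately show ?thesis unfolding beta_W by linarith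
qed

lemma beta_pos: "v < V \<Longrightarrow> t \<in> {1..T} \<Longrightarrow> 0 < beta S lam g x v t"
  using beta_ge[of v t] kappa_ge1 by (smt (verit) divide_pos_pos)

lemma kb_ge1: "v < V \<Longrightarrow> t \<in> {1..T} \<Longrightarrow> 1 \<le> \<kappa> * beta S lam g x v t"
  using beta_ge[of v t] kappa_ge1 by (simp add: field_simps)

lemma notif_range: assumes "v < V" shows "0 \<le> notif_prob S lam g x v s t \<and> notif_prob S lam g x v s t \<le> x v s t"
proof (cases "s < S \<and> t \<in> {1..T}")
  case True
  have k: "1 \<le> \<kappa> * beta S lam g x v t" using kb_ge1 assms True by auto
  have x: "0 \<le> x v s t" using x_range[OF assms] by auto
  have "x v s t / (\<kappa> * beta S lam g x v t) \<le> x v s t / 1"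
    using k x by (intro divide_left_mono) auto
  then show ?thesis unfolding notif_prob_def using k x by auto
next
  case False then show ?thesis using x_zero[OF assms False] by (simp add: notif_prob_def)
qed

lemma notif_le1: "v < V \<Longrightarrow> notif_prob S lam g x v s t \<le> 1"
  using notif_range[of v s t] x_range[of v s t] by auto

lemma beta_notif: assumes "v < V" "t \<in> {1..T}"
  shows "beta S lam g x v t * notif_prob S lam g x v s t = x v s t / \<kappa>"
  using beta_pos[OF assms] kappa_ge1 unfolding notif_prob_def by (simp add: field_simps)

end

lemma int_pmf_bnd:
  fixes f :: "'a \<Rightarrow> real"
  assumes "\<And>y. y \<in> set_pmf M \<Longrightarrow> \<bar>f y\<bar> \<le> B"
  shows "integrable (measure_pmf M) f"
  by (rule measure_pmf.integrable_const_bound[where B=B]) (auto simp: AE_measure_pmf_iff assms)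

lemma arrival_exp:
  assumes nn: "\<forall>s<S. 0 \<le> lam s t" and sm: "(\<Sum>s<S. lam s t) \<le> 1"
  shows "measure_pmf.expectation (arrival S lam t) (F :: nat option \<Rightarrow> real) =
     (1 - (\<Sum>s<S. lam s t)) * F None + (\<Sum>s<S. lam s t * F (Some s))"
proof -
  define f where "f = (\<lambda>a. case a of None \<Rightarrow> 1 - (\<Sum>s<S. lam s t)
                                          | Some s \<Rightarrow> (if s < S then lam s t else 0))"
  define A where "A = insert None (Some ` {..<S})"
  have finA: "finite A" by (simp add: A_def)
  have fnn: "\<And>a. 0 \<le> f a" using nn sm by (auto simp: f_def split: option.splits)
  have out: "\<And>a. a \<notin> A \<Longrightarrow> f a = 0"
    by (auto simp: f_def A_def split: option.splits)
  have nN: "None \<notin> Some ` {..<S}" by auto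
  have sumA: "(\<Sum>a\<in>A. h a) = h None + (\<Sum>s<S. h (Some s))" for h :: "nat option \<Rightarrow> 'b::comm_monoid_add"
    unfolding A_def by (simp add: sum.reindex)
  have "(\<integral>\<^sup>+a. ennreal (f a) \<partial>count_space UNIV) = (\<Sum>a\<in>A. ennreal (f a))"
    by (rule nn_integral_count_space') (auto simp: finA out)
  also have "\<dots> = ennreal (\<Sum>a\<in>A. f a)" using fnn by (simp add: sum_ennreal)
  also have "(\<Sum>a\<in>A. f a) = 1" unfolding sumA by (simp add: f_def)
  finally have prob: "(\<integral>\<^sup>+a. ennreal (f a) \<partial>count_space UNIV) = 1" by simp
  have arr: "arrival S lam t = embed_pmf f" unfolding arrival_def f_def by simp
  have pmfa: "pmf (arrival S lam t) a = f a" for a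
    unfolding arr by (rule pmf_embed_pmf[OF fnn prob])
  have "measure_pmf.expectation (arrival S lam t) F = (\<Sum>a\<in>A. F a * pmf (arrival S lam t) a)"
    by (rule integral_measure_pmf_real[OF finA]) (use out in \<open>auto simp: set_pmf_eq pmfa\<close>)
  also have "\<dots> = (1 - (\<Sum>s<S. lam s t)) * F None + (\<Sum>s<S. lam s t * F (Some s))"
    unfolding sumA pmfa by (simp add: f_def mult.commute)
  finally show ?thesis .
qed

lemma vol_exp:
  fixes F :: "bool \<times> bool \<times> nat \<Rightarrow> real"
  assumes "0 \<le> pn" "pn \<le> 1" "0 \<le> pr" "pr \<le> 1" and bnd: "\<And>y. \<bar>F y\<bar> \<le> B"
  shows "measure_pmf.expectation (vol_outcome pn pr g) F =
    pn * (pr * measure_pmf.expectation g (\<lambda>z. F (True, True, z)) + (1 - pr) * measure_pmf.expectation g (\<lambda>z. F (True, False, z)))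
  + (1 - pn) * (pr * measure_pmf.expectation g (\<lambda>z. F (False, True, z)) + (1 - pr) * measure_pmf.expectation g (\<lambda>z. F (False, False, z)))"
  unfolding vol_outcome_def
  apply (subst exp_bind_pmf[where B=B], rule bnd)
  apply (subst exp_bind_pmf[where B=B], rule bnd)
  using assms by (simp add: algebra_simps)

lemma Pi_marg:
  fixes F :: "'b \<Rightarrow> real"
  assumes "finite A" "v \<in> A"
  shows "measure_pmf.expectation (Pi_pmf A d P) (\<lambda>\<omega>. F (\<omega> v)) = measure_pmf.expectation (P v) F"
proof -
  have "measure_pmf.expectation (Pi_pmf A d P) (\<lambda>\<omega>. F (\<omega> v)) =
        measure_pmf.expectation (map_pmf (\<lambda>\<omega>. \<omega> v) (Pi_pmf A d P)) F" by simp
  also have "\<dots> = measure_pmf.expectation (P v) F" using assms by (simp add: Pi_pmf_component)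
  finally show ?thesis .
qed

lemma exp_ind: "measure_pmf.expectation M (\<lambda>z. if P z then 1 else 0 :: real) = measure_pmf.prob M {z. P z}"
proof -
  have "(\<lambda>z. if P z then 1 else 0 :: real) = indicator {z. P z}" by (auto simp: indicator_def)
  then show ?thesis by simp
qed

lemma ex_prod: "(if \<exists>v<(n::nat). A v then 1 else 0 :: real) = 1 - (\<Prod>v<n. 1 - (if A v then 1 else 0))"
proof (induction n)
  case 0 then show ?case by simp
next
  case (Suc n)
  have e: "(\<exists>v<Suc n. A v) = ((\<exists>v<n. A v) \<or> A n)" using less_Suc_eq by auto
  show ?case
  proof (cases "\<exists>v<n. A v")
    case True
    then have "(\<Prod>v<n. 1 - (if A v then 1 else 0 :: real)) = 0" using Suc.IH by simp
    then show ?thesis using True e by simp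
  next
    case False
    then have "(\<Prod>v<n. 1 - (if A v then 1 else 0 :: real)) = 1" using Suc.IH by simp
    then show ?thesis using False e by (cases "A n") auto
  qed
qed

lemma prod_telesc: "1 - (\<Prod>v<(n::nat). 1 - w v) = (\<Sum>v<n. w v * (\<Prod>u<v. 1 - w u :: real))"
  by (induction n) (auto simp: algebra_simps)

lemma prod_lb:
  assumes "\<And>v. v < n \<Longrightarrow> 0 \<le> z v \<and> z v \<le> w v \<and> w v \<le> (1::real)"
  shows "(\<Sum>v<(n::nat). z v * (\<Prod>u<v. 1 - w u)) \<le> 1 - (\<Prod>v<n. 1 - z v)"
  using assms
proof (induction n)
  case 0 then show ?case by simp
next
  case (Suc n)
  have IH: "(\<Sum>v<n. z v * (\<Prod>u<v. 1 - w u)) \<le> 1 - (\<Prod>v<n. 1 - z v)" using Suc by auto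
  have "(\<Prod>u<n. 1 - w u) \<le> (\<Prod>u<n. 1 - z u)"
    using Suc.prems by (intro prod_mono) auto
  moreover have "0 \<le> z n" using Suc.prems by auto
  ultimately have "z n * (\<Prod>u<n. 1 - w u) \<le> z n * (\<Prod>u<n. 1 - z u)" by (rule mult_left_mono)
  then show ?case using IH by (simp add: algebra_simps)
qed

context inst begin

abbreviation "nf v s t \<equiv> notif_prob S lam g x v s t"
definition "PP s t = Pi_pmf {..<V} (False, False, 0) (\<lambda>v. vol_outcome (nf v s t) (p v s) g)"
definition "nr r t \<omega> = (\<lambda>v. if v < V \<and> r v \<le> t \<and> fst (\<omega> v) then t + snd (snd (\<omega> v)) else r v)"
definition "dn r t \<omega> = (\<exists>v<V. r v \<le> t \<and> fst (\<omega> v) \<and> fst (snd (\<omega> v)))"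
abbreviation "run k \<equiv> sdn_run V S lam p g x k"

lemma step_eq: "sdn_step V S lam p g x t (r, c) = bind_pmf (arrival S lam t) (\<lambda>a. case a of
        None \<Rightarrow> return_pmf (r, c)
      | Some s \<Rightarrow> map_pmf (\<lambda>\<omega>. (nr r t \<omega>, c + (if dn r t \<omega> then 1 else 0))) (PP s t))"
  unfolding sdn_step_def PP_def nr_def dn_def by simp

lemma step_exp:
  assumes t: "t \<in> {1..T}" and bnd: "\<And>y. y \<in> set_pmf (sdn_step V S lam p g x t (r, c)) \<Longrightarrow> \<bar>H y\<bar> \<le> B"
  shows "measure_pmf.expectation (sdn_step V S lam p g x t (r, c)) H =
     (1 - (\<Sum>s<S. lam s t)) * H (r, c) +
     (\<Sum>s<S. lam s t * measure_pmf.expectation (PP s t) (\<lambda>\<omega>. H (nr r t \<omega>, c + (if dn r t \<omega> then 1 else 0))))"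
  unfolding step_eq
  apply (subst exp_bind_pmf[where B=B])
  using bnd apply (simp add: step_eq)
  apply (subst arrival_exp)
  using lam_nonneg lam_sum t by auto

lemma supp_step: "y \<in> set_pmf (sdn_step V S lam p g x t (r, c)) \<Longrightarrow> snd y \<le> c + 1"
  unfolding step_eq by (auto split: option.splits)

lemma supp_run: "y \<in> set_pmf (run k) \<Longrightarrow> snd y \<le> k"
proof (induction k arbitrary: y)
  case 0 then show ?case by simp
next
  case (Suc k)
  then obtain rc where rc: "rc \<in> set_pmf (run k)" and y: "y \<in> set_pmf (sdn_step V S lam p g x (Suc k) rc)"
    by auto
  obtain r c where rcd: "rc = (r, c)" by fastforce
  have "snd y \<le> c + 1" using supp_step y rcd by blast
  moreover have "c \<le> k" using Suc.IH[OF rc] rcd by simp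
  ultimately show ?case by simp
qed

lemma nf_range: "v < V \<Longrightarrow> 0 \<le> nf v s t \<and> nf v s t \<le> 1"
  using notif_range[of v s t] notif_le1[of v s t] by auto

lemma act_step:
  assumes t: "t \<in> {1..T}" and v: "v < V" and u: "t \<le> u"
  shows "measure_pmf.expectation (sdn_step V S lam p g x t (r, c)) (\<lambda>rc. if u < fst rc v then 1 else 0) =
     (if u < r v then 1 else 0) + (if r v \<le> t then (\<Sum>s<S. lam s t * nf v s t * (1 - Gcdf g (u - t))) else 0)"
proof -
  define \<psi> where "\<psi> = (\<lambda>oc :: bool \<times> bool \<times> nat. if u < (if r v \<le> t \<and> fst oc then t + snd (snd oc) else r v) then 1 else (0::real))"
  have inner: "measure_pmf.expectation (PP s t) (\<lambda>\<omega>. if u < nr r t \<omega> v then 1 else 0) =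
     (if r v \<le> t then nf v s t * (1 - Gcdf g (u - t)) else (if u < r v then 1 else 0))" if s: "s < S" for s
  proof -
    have "measure_pmf.expectation (PP s t) (\<lambda>\<omega>. if u < nr r t \<omega> v then 1 else 0) =
          measure_pmf.expectation (PP s t) (\<lambda>\<omega>. \<psi> (\<omega> v))"
      unfolding nr_def \<psi>_def using v by simp
    also have "\<dots> = measure_pmf.expectation (vol_outcome (nf v s t) (p v s) g) \<psi>"
      unfolding PP_def using v by (intro Pi_marg) auto
    also have "\<dots> = (if r v \<le> t then nf v s t * (1 - Gcdf g (u - t)) else (if u < r v then 1 else 0))"
    proof -
      have pr: "0 \<le> p v s" "p v s \<le> 1" using p_range v s by auto
      have g1: "measure_pmf.expectation g (\<lambda>z. if u < t + z then 1 else 0 :: real) = 1 - Gcdf g (u - t)"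
      proof -
        have "{z. u < t + z} = {z. u - t < z}" using u by auto
        then show ?thesis using Gcdf_tail[OF g_pos, of "u - t"] by (simp add: exp_ind)
      qed
      have g2: "measure_pmf.expectation g (\<lambda>z. if u < z + t then 1 else 0 :: real) = 1 - Gcdf g (u - t)"
        using g1 by (simp add: add.commute)
      show ?thesis
        apply (subst vol_exp[where B=1])
        using nf_range[OF v, of s t] pr apply (auto simp: \<psi>_def g1 g2 algebra_simps)
        using u by auto
    qed
    finally show ?thesis .
  qed
  have "measure_pmf.expectation (sdn_step V S lam p g x t (r, c)) (\<lambda>rc. if u < fst rc v then 1 else 0) =
     (1 - (\<Sum>s<S. lam s t)) * (if u < r v then 1 else 0) +
     (\<Sum>s<S. lam s t * (if r v \<le> t then nf v s t * (1 - Gcdf g (u - t)) else (if u < r v then 1 else 0)))"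
    by (subst step_exp[OF t, where B=1]) (auto simp: inner)
  also have "\<dots> = (if u < r v then 1 else 0) + (if r v \<le> t then (\<Sum>s<S. lam s t * nf v s t * (1 - Gcdf g (u - t))) else 0)"
  proof (cases "r v \<le> t")
    case True then show ?thesis using u by (simp add: mult.assoc)
  next
    case False then show ?thesis by (simp add: sum_distrib_right[symmetric] algebra_simps)
  qed
  finally show ?thesis .
qed

end

context inst begin

lemma cnt_step:
  assumes t: "t \<in> {1..T}"
  shows "measure_pmf.expectation (sdn_step V S lam p g x t (r, c)) (\<lambda>rc. real (snd rc)) =
     real c + (\<Sum>s<S. lam s t * (1 - (\<Prod>v<V. 1 - (if r v \<le> t then nf v s t * p v s else 0))))"
proof -
  define f where "f = (\<lambda>v (oc :: bool \<times> bool \<times> nat). 1 - (if r v \<le> t \<and> fst oc \<and> fst (snd oc) then 1 else 0 :: real))"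
  have inner: "measure_pmf.expectation (PP s t) (\<lambda>\<omega>. real c + real (if dn r t \<omega> then 1 else 0)) =
       real c + (1 - (\<Prod>v<V. 1 - (if r v \<le> t then nf v s t * p v s else 0)))" if s: "s < S" for s
  proof -
    have e1: "(\<lambda>\<omega>. real c + real (if dn r t \<omega> then 1 else 0)) = (\<lambda>\<omega>. real c + (1 - (\<Prod>v<V. f v (\<omega> v))))"
      unfolding dn_def f_def by (rule ext, subst ex_prod[symmetric]) auto
    have intP: "integrable (measure_pmf (PP s t)) (\<lambda>\<omega>. \<Prod>v<V. f v (\<omega> v))"
      by (rule int_pmf_bnd[where B=1]) (auto simp: f_def abs_prod intro!: prod_le_1)
    have "measure_pmf.expectation (PP s t) (\<lambda>\<omega>. real c + (1 - (\<Prod>v<V. f v (\<omega> v)))) =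
          real c + (1 - measure_pmf.expectation (PP s t) (\<lambda>\<omega>. \<Prod>v<V. f v (\<omega> v)))"
      using intP by (simp add: Bochner_Integration.integral_add Bochner_Integration.integral_diff)
    also have "measure_pmf.expectation (PP s t) (\<lambda>\<omega>. \<Prod>v<V. f v (\<omega> v)) =
               (\<Prod>v<V. measure_pmf.expectation (vol_outcome (nf v s t) (p v s) g) (f v))"
      unfolding PP_def
      by (rule expectation_prod_Pi_pmf) (auto simp: f_def intro!: int_pmf_bnd[where B=1])
    also have "\<dots> = (\<Prod>v<V. 1 - (if r v \<le> t then nf v s t * p v s else 0))"
    proof (rule prod.cong[OF refl])
      fix v assume v: "v \<in> {..<V}"
      have pr: "0 \<le> p v s" "p v s \<le> 1" using p_range v s by auto
      show "measure_pmf.expectation (vol_outcome (nf v s t) (p v s) g) (f v) = 1 - (if r v \<le> t then nf v s t * p v s else 0)"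
        apply (subst vol_exp[where B=1])
        using nf_range[of v s t] v pr by (auto simp: f_def algebra_simps)
    qed
    finally show ?thesis using e1 by simp
  qed
  have "measure_pmf.expectation (sdn_step V S lam p g x t (r, c)) (\<lambda>rc. real (snd rc)) =
     (1 - (\<Sum>s<S. lam s t)) * real c +
     (\<Sum>s<S. lam s t * (real c + (1 - (\<Prod>v<V. 1 - (if r v \<le> t then nf v s t * p v s else 0)))))"
    by (subst step_exp[OF t, where B="real c + 1"]) (auto dest!: supp_step simp: inner)
  also have "\<dots> = real c + (\<Sum>s<S. lam s t * (1 - (\<Prod>v<V. 1 - (if r v \<le> t then nf v s t * p v s else 0))))"
    by (simp add: sum_distrib_left sum.distrib sum_subtractf algebra_simps)
  finally show ?thesis .
qed

definition D :: "nat \<Rightarrow> nat \<Rightarrow> nat \<Rightarrow> real" where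
  "D k u v = (\<Sum>\<tau>=1..k. \<Sum>s<S. lam s \<tau> * (x v s \<tau> / \<kappa>) * (1 - Gcdf g (u - \<tau>)))"

lemma act_run:
  assumes "k \<le> T" "v < V" "k \<le> u"
  shows "measure_pmf.expectation (run k) (\<lambda>rc. if u < fst rc v then 1 else 0) = D k u v"
  using assms
proof (induction k arbitrary: u)
  case 0 then show ?case by (simp add: D_def)
next
  case (Suc k)
  have t: "Suc k \<in> {1..T}" using Suc.prems by auto
  have pk: "measure_pmf.expectation (run k) (\<lambda>rc. if Suc k < fst rc v then 1 else 0) = D k (Suc k) v"
    using Suc.IH[of "Suc k"] Suc.prems by auto
  define C where "C = (\<Sum>s<S. lam s (Suc k) * nf v s (Suc k) * (1 - Gcdf g (u - Suc k)))"
  have "measure_pmf.expectation (run (Suc k)) (\<lambda>rc. if u < fst rc v then 1 else 0 :: real) =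
    measure_pmf.expectation (run k) (\<lambda>rc. measure_pmf.expectation (sdn_step V S lam p g x (Suc k) rc) (\<lambda>rc. if u < fst rc v then 1 else 0))"
    unfolding sdn_run.simps by (subst exp_bind_pmf[where B=1]) auto
  also have "\<dots> = measure_pmf.expectation (run k) (\<lambda>rc. (if u < fst rc v then 1 else 0) + C * (if fst rc v \<le> Suc k then 1 else 0))"
    apply (intro Bochner_Integration.integral_cong refl)
    subgoal for rc using act_step[OF t Suc.prems(2), of u "fst rc" "snd rc"] Suc.prems
      by (cases rc) (simp add: C_def)
    done
  also have "\<dots> = measure_pmf.expectation (run k) (\<lambda>rc. if u < fst rc v then 1 else 0)
      + C * measure_pmf.expectation (run k) (\<lambda>rc. if fst rc v \<le> Suc k then 1 else 0)"
    by (subst Bochner_Integration.integral_add) (auto intro!: int_pmf_bnd[where B=1])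
  also have "measure_pmf.expectation (run k) (\<lambda>rc. if fst rc v \<le> Suc k then 1 else 0 :: real) =
      1 - measure_pmf.expectation (run k) (\<lambda>rc. if Suc k < fst rc v then 1 else 0)"
  proof -
    have eq1: "(\<lambda>rc :: (nat \<Rightarrow> nat) \<times> nat. if fst rc v \<le> Suc k then 1 else 0 :: real) = (\<lambda>rc. 1 - (if Suc k < fst rc v then 1 else 0))"
      by auto
    moreover have "measure_pmf.expectation (run k) (\<lambda>rc. 1 - (if Suc k < fst rc v then 1 else 0 :: real)) =
       measure_pmf.expectation (run k) (\<lambda>rc. 1) - measure_pmf.expectation (run k) (\<lambda>rc. if Suc k < fst rc v then 1 else 0 :: real)"
      by (rule Bochner_Integration.integral_diff) (auto intro!: int_pmf_bnd[where B=1])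
    ultimately show ?thesis by (subst eq1) simp
  qed
  also have "\<dots> = beta S lam g x v (Suc k)"
    unfolding pk D_def beta_def by simp
  also have "measure_pmf.expectation (run k) (\<lambda>rc. if u < fst rc v then 1 else 0) = D k u v"
    using Suc by auto
  also have "C * beta S lam g x v (Suc k) = (\<Sum>s<S. lam s (Suc k) * (x v s (Suc k) / \<kappa>) * (1 - Gcdf g (u - Suc k)))"
    unfolding C_def sum_distrib_right
    by (intro sum.cong refl) (simp add: beta_notif[OF Suc.prems(2) t, symmetric] algebra_simps)
  finally show ?case by (simp add: D_def)
qed

lemma active_prob:
  assumes "k < T" "v < V"
  shows "measure_pmf.expectation (run k) (\<lambda>rc. if fst rc v \<le> Suc k then 1 else 0) = beta S lam g x v (Suc k)"
proof -
  have eq1: "(\<lambda>rc :: (nat \<Rightarrow> nat) \<times> nat. if fst rc v \<le> Suc k then 1 else 0 :: real) = (\<lambda>rc. 1 - (if Suc k < fst rc v then 1 else 0))"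
    by auto
  moreover have "measure_pmf.expectation (run k) (\<lambda>rc. 1 - (if Suc k < fst rc v then 1 else 0 :: real)) =
       measure_pmf.expectation (run k) (\<lambda>rc. 1) - measure_pmf.expectation (run k) (\<lambda>rc. if Suc k < fst rc v then 1 else 0 :: real)"
    by (rule Bochner_Integration.integral_diff) (auto intro!: int_pmf_bnd[where B=1])
  ultimately have "measure_pmf.expectation (run k) (\<lambda>rc. if fst rc v \<le> Suc k then 1 else 0 :: real) =
      1 - measure_pmf.expectation (run k) (\<lambda>rc. if Suc k < fst rc v then 1 else 0)"
    by (subst eq1) simp
  also have "\<dots> = beta S lam g x v (Suc k)"
    using act_run[of k v "Suc k"] assms unfolding D_def beta_def by simp
  finally show ?thesis .
qed

end

context inst begin

lemma cnt_run:
  assumes "k \<le> T"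
  shows "(1 / \<kappa>) * (\<Sum>t=1..k. \<Sum>s<S. lam s t * (1 - (\<Prod>v<V. 1 - x v s t * p v s)))
           \<le> measure_pmf.expectation (run k) (\<lambda>rc. real (snd rc))"
  using assms
proof (induction k)
  case 0 then show ?case by simp
next
  case (Suc k)
  define t where "t = Suc k"
  have t: "t \<in> {1..T}" using Suc.prems t_def by auto
  have kT: "k < T" using Suc.prems by simp
  define z where "z = (\<lambda>(rc :: (nat \<Rightarrow> nat) \<times> nat) s v. if fst rc v \<le> t then nf v s t * p v s else 0)"
  define w where "w = (\<lambda>s v. x v s t * p v s)"
  define Pr where "Pr = (\<lambda>s v. \<Prod>u<v. 1 - w s u)"
  have zw: "0 \<le> z rc s v \<and> z rc s v \<le> w s v \<and> w s v \<le> 1" if "v < V" "s < S" for rc s v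
  proof -
    have "0 \<le> p v s" "p v s \<le> 1" using p_range that by auto
    moreover have "0 \<le> nf v s t" "nf v s t \<le> x v s t" "x v s t \<le> 1"
      using notif_range[of v s t] x_range[of v s t] that by auto
    ultimately show ?thesis unfolding z_def w_def
      by (auto intro: mult_right_mono mult_le_one mult_nonneg_nonneg)
  qed
  have lamt: "s < S \<Longrightarrow> 0 \<le> lam s t" for s using lam_nonneg t by auto
  have bndF: "\<bar>1 - (\<Prod>v<V. 1 - z rc s v)\<bar> \<le> 1" if s: "s \<in> {..<S}" for s rc
  proof -
    have zz: "\<And>v. v \<in> {..<V} \<Longrightarrow> 0 \<le> z rc s v \<and> z rc s v \<le> 1"
    proof -
      fix v assume "v \<in> {..<V}"
      then show "0 \<le> z rc s v \<and> z rc s v \<le> 1" using zw[of v s rc] s by auto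
    qed
    have "0 \<le> (\<Prod>v<V. 1 - z rc s v)" "(\<Prod>v<V. 1 - z rc s v) \<le> 1"
      using zz by (auto intro!: prod_nonneg prod_le_1)
    then show ?thesis by auto
  qed
  have intF: "integrable (measure_pmf (run k)) (\<lambda>rc. \<Sum>s<S. lam s t * (1 - (\<Prod>v<V. 1 - z rc s v)))"
    apply (rule Bochner_Integration.integrable_sum)
    apply (rule Bochner_Integration.integrable_mult_right)
    apply (rule int_pmf_bnd[where B=1])
    apply (rule bndF)
    apply auto
    done
  have intC: "integrable (measure_pmf (run k)) (\<lambda>rc. real (snd rc))"
    by (rule int_pmf_bnd[where B=k]) (auto dest: supp_run)
  have intG: "integrable (measure_pmf (run k)) (\<lambda>rc. \<Sum>s<S. \<Sum>v<V. (lam s t * nf v s t * p v s * Pr s v) * (if fst rc v \<le> t then 1 else 0))"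
    by (rule Bochner_Integration.integrable_sum, rule Bochner_Integration.integrable_sum, rule Bochner_Integration.integrable_mult_right, rule int_pmf_bnd[where B=1]) auto
  have e1: "measure_pmf.expectation (run (Suc k)) (\<lambda>rc. real (snd rc)) =
      measure_pmf.expectation (run k) (\<lambda>rc. measure_pmf.expectation (sdn_step V S lam p g x t rc) (\<lambda>rc. real (snd rc)))"
    unfolding sdn_run.simps t_def
  proof (rule exp_bind_pmf[where B="real (Suc k)"])
    fix y assume "y \<in> set_pmf (bind_pmf (run k) (sdn_step V S lam p g x (Suc k)))"
    then have "y \<in> set_pmf (run (Suc k))" by simp
    then show "\<bar>real (snd y)\<bar> \<le> real (Suc k)" using supp_run[of y "Suc k"] by simp
  qed
  also have "\<dots> = measure_pmf.expectation (run k) (\<lambda>rc. real (snd rc) + (\<Sum>s<S. lam s t * (1 - (\<Prod>v<V. 1 - z rc s v))))"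
    apply (intro Bochner_Integration.integral_cong refl)
    subgoal for rc using cnt_step[OF t, of "fst rc" "snd rc"] by (cases rc) (simp add: z_def)
    done
  also have "\<dots> = measure_pmf.expectation (run k) (\<lambda>rc. real (snd rc)) +
       measure_pmf.expectation (run k) (\<lambda>rc. \<Sum>s<S. lam s t * (1 - (\<Prod>v<V. 1 - z rc s v)))"
    by (rule Bochner_Integration.integral_add[OF intC intF])
  finally have e2: "measure_pmf.expectation (run (Suc k)) (\<lambda>rc. real (snd rc)) = measure_pmf.expectation (run k) (\<lambda>rc. real (snd rc)) +
       measure_pmf.expectation (run k) (\<lambda>rc. \<Sum>s<S. lam s t * (1 - (\<Prod>v<V. 1 - z rc s v)))" .
  have e3: "measure_pmf.expectation (run k) (\<lambda>rc. \<Sum>s<S. lam s t * (1 - (\<Prod>v<V. 1 - z rc s v))) \<ge>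
       measure_pmf.expectation (run k) (\<lambda>rc. \<Sum>s<S. \<Sum>v<V. (lam s t * nf v s t * p v s * Pr s v) * (if fst rc v \<le> t then 1 else 0))"
  proof (rule integral_mono[OF intG intF])
    fix rc
    show "(\<Sum>s<S. \<Sum>v<V. (lam s t * nf v s t * p v s * Pr s v) * (if fst rc v \<le> t then 1 else 0))
          \<le> (\<Sum>s<S. lam s t * (1 - (\<Prod>v<V. 1 - z rc s v)))"
    proof (rule sum_mono)
      fix s assume s: "s \<in> {..<S}"
      have "(\<Sum>v<V. z rc s v * Pr s v) \<le> 1 - (\<Prod>v<V. 1 - z rc s v)"
        unfolding Pr_def using zw s by (intro prod_lb) auto
      then have "lam s t * (\<Sum>v<V. z rc s v * Pr s v) \<le> lam s t * (1 - (\<Prod>v<V. 1 - z rc s v))"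
        using lamt s by (intro mult_left_mono) auto
      moreover have "lam s t * (\<Sum>v<V. z rc s v * Pr s v) = (\<Sum>v<V. (lam s t * nf v s t * p v s * Pr s v) * (if fst rc v \<le> t then 1 else 0))"
        unfolding sum_distrib_left z_def by (intro sum.cong refl) auto
      ultimately show "(\<Sum>v<V. (lam s t * nf v s t * p v s * Pr s v) * (if fst rc v \<le> t then 1 else 0)) \<le> lam s t * (1 - (\<Prod>v<V. 1 - z rc s v))"
        by simp
    qed
  qed
  have e4: "measure_pmf.expectation (run k) (\<lambda>rc. \<Sum>s<S. \<Sum>v<V. (lam s t * nf v s t * p v s * Pr s v) * (if fst rc v \<le> t then 1 else 0))
     = (\<Sum>s<S. \<Sum>v<V. (lam s t * nf v s t * p v s * Pr s v) * beta S lam g x v t)"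
    apply (subst Bochner_Integration.integral_sum)
     apply (rule Bochner_Integration.integrable_sum, rule Bochner_Integration.integrable_mult_right, rule int_pmf_bnd[where B=1], simp)
    apply (intro sum.cong refl)
    apply (subst Bochner_Integration.integral_sum)
     apply (rule Bochner_Integration.integrable_mult_right, rule int_pmf_bnd[where B=1], simp)
    apply (intro sum.cong refl)
    apply (subst Bochner_Integration.integral_mult_right_zero)
    using active_prob[OF kT] by (simp add: t_def)
  also have "\<dots> = (1 / \<kappa>) * (\<Sum>s<S. lam s t * (1 - (\<Prod>v<V. 1 - x v s t * p v s)))"
    unfolding sum_distrib_left
  proof (intro sum.cong refl)
    fix s assume s: "s \<in> {..<S}"
    have "(\<Sum>v<V. lam s t * nf v s t * p v s * Pr s v * beta S lam g x v t) =
          (\<Sum>v<V. (1 / \<kappa>) * lam s t * (w s v * Pr s v))"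
    proof (intro sum.cong refl)
      fix v assume v: "v \<in> {..<V}"
      have "beta S lam g x v t * nf v s t = x v s t / \<kappa>" using beta_notif[of v t s] v t by auto
      then show "lam s t * nf v s t * p v s * Pr s v * beta S lam g x v t = (1 / \<kappa>) * lam s t * (w s v * Pr s v)"
        unfolding w_def by (simp add: algebra_simps)
    qed
    also have "\<dots> = (1 / \<kappa>) * (lam s t * (1 - (\<Prod>v<V. 1 - x v s t * p v s)))"
      unfolding Pr_def w_def prod_telesc by (simp add: sum_distrib_left algebra_simps)
    finally show "(\<Sum>v<V. lam s t * nf v s t * p v s * Pr s v * beta S lam g x v t) = (1 / \<kappa>) * (lam s t * (1 - (\<Prod>v<V. 1 - x v s t * p v s)))" .
  qed
  finally have e5: "measure_pmf.expectation (run k) (\<lambda>rc. \<Sum>s<S. \<Sum>v<V. (lam s t * nf v s t * p v s * Pr s v) * (if fst rc v \<le> t then 1 else 0))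
     = (1 / \<kappa>) * (\<Sum>s<S. lam s t * (1 - (\<Prod>v<V. 1 - x v s t * p v s)))" .
  have step: "measure_pmf.expectation (run k) (\<lambda>rc. real (snd rc)) + (1 / \<kappa>) * (\<Sum>s<S. lam s t * (1 - (\<Prod>v<V. 1 - x v s t * p v s)))
      \<le> measure_pmf.expectation (run (Suc k)) (\<lambda>rc. real (snd rc))" using e2 e3 e5 by linarith
  have IH: "(1 / \<kappa>) * (\<Sum>t=1..k. \<Sum>s<S. lam s t * (1 - (\<Prod>v<V. 1 - x v s t * p v s))) \<le> measure_pmf.expectation (run k) (\<lambda>rc. real (snd rc))"
    using Suc by auto
  show ?case using IH step unfolding t_def by (simp add: distrib_left)
qed

end

lemma exp_bound: assumes "0 \<le> (A::real)" shows "(1 - exp (-1)) * min A 1 \<le> 1 - exp (- A)"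
proof (cases "A \<le> 1")
  case True
  have "exp ((1 - A) *\<^sub>R 0 + A *\<^sub>R (-1)) \<le> (1 - A) * exp 0 + A * exp (-1)"
    using convex_onD[OF exp_convex, of A 0 "-1"] True assms by auto
  then show ?thesis using True by (simp add: algebra_simps)
next
  case False
  then show ?thesis by simp
qed

lemma prod_exp: assumes "\<And>v. v < (n::nat) \<Longrightarrow> 0 \<le> a v \<and> a v \<le> (1::real)"
  shows "(\<Prod>v<n. 1 - a v) \<le> exp (- (\<Sum>v<n. a v))"
proof -
  have "(\<Prod>v<n. 1 - a v) \<le> (\<Prod>v<n. exp (- a v))"
    using assms by (intro prod_mono) (auto simp: add.commute[of 1] exp_ge_add_one_self[of "- a _", simplified])
  also have "\<dots> = exp (- (\<Sum>v<n. a v))" by (simp add: sum_negf[symmetric] exp_sum)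
  finally show ?thesis .
qed

lemma one_minus_prod: assumes "\<And>v. v < (n::nat) \<Longrightarrow> 0 \<le> a v \<and> a v \<le> (1::real)"
  shows "(1 - exp (-1)) * min (\<Sum>v<n. a v) 1 \<le> 1 - (\<Prod>v<n. 1 - a v)"
proof -
  have "0 \<le> (\<Sum>v<n. a v)" using assms by (intro sum_nonneg) auto
  then have "(1 - exp (-1)) * min (\<Sum>v<n. a v) 1 \<le> 1 - exp (- (\<Sum>v<n. a v))" by (rule exp_bound)
  then show ?thesis using prod_exp[of n a, OF assms] by linarith
qed

lemma fobj_ge_LPobj:
  assumes x: "x \<in> feasP V S T lam g" and lam: "\<forall>s<S. \<forall>t\<in>{1..T}. 0 \<le> lam s t"
    and p_range: "\<forall>v<V. \<forall>s<S. 0 \<le> p v s \<and> p v s \<le> 1"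
  shows "(1 - exp (-1)) * LPobj V S T lam p x \<le> fobj V S T lam p x"
  unfolding LPobj_def fobj_def sum_distrib_left
proof (intro sum_mono)
  fix t s assume t: "t \<in> {1..T}" and s: "s \<in> {..<S}"
  have a: "0 \<le> x v s t * p v s \<and> x v s t * p v s \<le> 1" if v: "v < V" for v
  proof -
    have "feas1 S T lam g (x v)" using x v by (auto simp: feasP_def)
    then have "0 \<le> x v s t" "x v s t \<le> 1" using s t unfolding feas1_def by auto
    moreover have "0 \<le> p v s" "p v s \<le> 1" using p_range v s by auto
    ultimately show ?thesis by (auto intro: mult_le_one)
  qed
  have "(1 - exp (-1)) * min (\<Sum>v<V. x v s t * p v s) 1 \<le> 1 - (\<Prod>v<V. 1 - x v s t * p v s)"
    by (rule one_minus_prod) (use a in auto)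
  then have "lam s t * ((1 - exp (-1)) * min (\<Sum>v<V. x v s t * p v s) 1) \<le> lam s t * (1 - (\<Prod>v<V. 1 - x v s t * p v s))"
    using lam s t by (intro mult_left_mono) auto
  then show "(1 - exp (-1)) * (lam s t * min (\<Sum>v<V. x v s t * p v s) 1) \<le> lam s t * (1 - (\<Prod>v<V. 1 - x v s t * p v s))"
    by (simp add: algebra_simps)
qed

definition cons1 :: "nat \<Rightarrow> (nat \<Rightarrow> nat \<Rightarrow> real) \<Rightarrow> nat pmf \<Rightarrow> (nat \<Rightarrow> nat \<Rightarrow> real) \<Rightarrow> nat \<Rightarrow> real" where
  "cons1 S lam g y t = (\<Sum>\<tau>=1..t. \<Sum>s<S. lam s \<tau> * y s \<tau> * (1 - Gcdf g (t - \<tau>)))"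

definition subf :: "nat \<Rightarrow> nat \<Rightarrow> nat \<Rightarrow> (nat \<Rightarrow> nat \<Rightarrow> real) \<Rightarrow> nat pmf \<Rightarrow> real \<Rightarrow> (nat \<Rightarrow> nat \<Rightarrow> nat \<Rightarrow> real) \<Rightarrow> bool" where
  "subf V S T lam g c z \<longleftrightarrow> (\<forall>v. V \<le> v \<longrightarrow> z v = (\<lambda>s t. 0)) \<and>
     (\<forall>v<V. (\<forall>s t. \<not> (s < S \<and> t \<in> {1..T}) \<longrightarrow> z v s t = 0) \<and>
            (\<forall>s t. s < S \<and> t \<in> {1..T} \<longrightarrow> 0 \<le> z v s t \<and> z v s t \<le> c) \<and>
            (\<forall>t\<in>{1..T}. cons1 S lam g (z v) t \<le> c))"

lemma subf_feasP: "subf V S T lam g 1 z \<Longrightarrow> z \<in> feasP V S T lam g"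
  unfolding subf_def feasP_def feas1_def cons1_def by auto

lemma feasP_subf: "z \<in> feasP V S T lam g \<Longrightarrow> subf V S T lam g 1 z"
  unfolding subf_def feasP_def feas1_def cons1_def by auto

lemma cons1_lin: "cons1 S lam g (\<lambda>s t. a s t + b s t / m) t = cons1 S lam g a t + cons1 S lam g b t / m"
proof -
  have e: "\<And>\<tau> s. lam s \<tau> * (a s \<tau> + b s \<tau> / m) * (1 - Gcdf g (t - \<tau>)) =
      lam s \<tau> * a s \<tau> * (1 - Gcdf g (t - \<tau>)) + lam s \<tau> * b s \<tau> * (1 - Gcdf g (t - \<tau>)) / m"
    by (simp add: divide_inverse algebra_simps)
  show ?thesis unfolding cons1_def by (simp only: e sum.distrib sum_divide_distrib)
qed

lemma subf_step:
  assumes "subf V S T lam g c z" "y \<in> feasP V S T lam g" "0 < m"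
  shows "subf V S T lam g (c + 1 / m) (\<lambda>v s t. z v s t + y v s t / m)"
proof -
  have y: "subf V S T lam g 1 y" using feasP_subf[OF assms(2)] .
  show ?thesis
    unfolding subf_def
  proof (intro conjI allI impI ballI)
    fix v assume "V \<le> v" then show "(\<lambda>s t. z v s t + y v s t / m) = (\<lambda>s t. 0)"
      using assms(1) y unfolding subf_def by auto
  next
    fix v s t assume "v < V" "\<not> (s < S \<and> t \<in> {1..T})"
    then show "z v s t + y v s t / m = 0" using assms(1) y unfolding subf_def by auto
  next
    fix v s t assume v: "v < V" and st: "s < S \<and> t \<in> {1..T}"
    have "0 \<le> z v s t" "z v s t \<le> c" "0 \<le> y v s t" "y v s t \<le> 1"
      using assms(1) y v st unfolding subf_def by auto
    then show "0 \<le> z v s t + y v s t / m" "z v s t + y v s t / m \<le> c + 1 / m"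
      using assms(3) divide_right_mono[of "y v s t" 1 m] by auto
  next
    fix v t assume v: "v < V" and t: "t \<in> {1..T}"
    have "cons1 S lam g (z v) t \<le> c" "cons1 S lam g (y v) t \<le> 1"
      using assms(1) y v t unfolding subf_def by auto
    then show "cons1 S lam g (\<lambda>s t. z v s t + y v s t / m) t \<le> c + 1 / m"
      unfolding cons1_lin using assms(3) divide_right_mono[of "cons1 S lam g (y v) t" 1 m] by auto
  qed
qed

lemma AA_feas:
  assumes "is_AA_output V S T lam p g x"
  shows "x \<in> feasP V S T lam g"
proof -
  obtain m xs where m: "1 \<le> m" and x0: "xs 0 = (\<lambda>v s t. 0)"
    and stp: "\<forall>i\<in>{1..m}. \<exists>y\<in>feasP V S T lam g.
            (\<forall>z\<in>feasP V S T lam g. innerp V S T z (gradf V S T lam p (xs (i - 1)))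
                                    \<le> innerp V S T y (gradf V S T lam p (xs (i - 1)))) \<and>
            xs i = (\<lambda>v s t. xs (i - 1) v s t + y v s t / real m)"
    and xm: "x = xs m"
    using assms unfolding is_AA_output_def by blast
  have "i \<le> m \<Longrightarrow> subf V S T lam g (real i / real m) (xs i)" for i
  proof (induction i)
    case 0 then show ?case unfolding x0 subf_def cons1_def by simp
  next
    case (Suc i)
    have si: "Suc i \<in> {1..m}" using Suc.prems by auto
    obtain y where y: "y \<in> feasP V S T lam g" and xi0: "xs (Suc i) = (\<lambda>v s t. xs (Suc i - 1) v s t + y v s t / real m)"
      using bspec[OF stp si] by blast
    have xi: "xs (Suc i) = (\<lambda>v s t. xs i v s t + y v s t / real m)" using xi0 by simp
    have IH: "subf V S T lam g (real i / real m) (xs i)" using Suc by simp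
    have "subf V S T lam g (real i / real m + 1 / real m) (xs (Suc i))"
      unfolding xi using subf_step[OF IH y] m by simp
    moreover have "real i / real m + 1 / real m = real (Suc i) / real m" by (simp add: add_divide_distrib)
    ultimately show ?case by simp
  qed
  from this[of m] have "subf V S T lam g 1 (xs m)" using m by simp
  then show ?thesis unfolding xm by (rule subf_feasP)
qed

theorem theorem3:
  fixes V S T :: nat
    and lam :: "nat \<Rightarrow> nat \<Rightarrow> real" and p :: "nat \<Rightarrow> nat \<Rightarrow> real" and g :: "nat pmf"
    and xLP xAA xSQ xstar :: "nat \<Rightarrow> nat \<Rightarrow> nat \<Rightarrow> real"
  assumes lam_nonneg: "\<forall>s<S. \<forall>t\<in>{1..T}. 0 \<le> lam s t"
    and lam_sum: "\<forall>t\<in>{1..T}. (\<Sum>s<S. lam s t) \<le> 1"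
    and p_range: "\<forall>v<V. \<forall>s<S. 0 \<le> p v s \<and> p v s \<le> 1"
    and g_pos: "pmf g 0 = 0"
    and LP: "is_LP_opt V S T lam p g xLP"
    and AA: "is_AA_output V S T lam p g xAA"
    and SQ: "is_SQ V S T lam p g xSQ"
    and xstar_in: "xstar \<in> {xLP, xAA, xSQ}"
    and xstar_max: "\<forall>y\<in>{xLP, xAA, xSQ}. fobj V S T lam p y \<le> fobj V S T lam p xstar"
  shows "SDN_value V S T lam p g xstar
           \<ge> (1 / (2 - mdhr g)) * (1 - exp (-1)) * LPval V S T lam p g"
proof -
  have LPf: "xLP \<in> feasP V S T lam g" using LP by (simp add: is_LP_opt_def)
  have SQf: "xSQ \<in> feasP V S T lam g" using SQ by (simp add: is_SQ_def feasP_def)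
  have AAf: "xAA \<in> feasP V S T lam g" using AA by (rule AA_feas)
  have xf: "xstar \<in> feasP V S T lam g" using xstar_in LPf SQf AAf by auto
  interpret inst V S T lam p g xstar
    by unfold_locales (use lam_nonneg lam_sum p_range g_pos xf in auto)
  have c: "(1 / (2 - mdhr g)) * fobj V S T lam p xstar \<le> SDN_value V S T lam p g xstar"
    using cnt_run[of T] unfolding fobj_def SDN_value_def by simp
  have lpv: "LPval V S T lam p g = LPobj V S T lam p xLP"
    unfolding LPval_def using LP unfolding is_LP_opt_def
    by (intro cSup_eq_maximum) auto
  have f1: "fobj V S T lam p xLP \<le> fobj V S T lam p xstar" using xstar_max by auto
  have f2: "(1 - exp (-1)) * LPobj V S T lam p xLP \<le> fobj V S T lam p xLP"
    by (rule fobj_ge_LPobj[OF LPf lam_nonneg p_range])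
  have k: "0 \<le> 1 / (2 - mdhr g)" using kappa_ge1 by simp
  have "(1 / (2 - mdhr g)) * ((1 - exp (-1)) * LPval V S T lam p g) \<le> (1 / (2 - mdhr g)) * fobj V S T lam p xstar"
    using f1 f2 lpv k by (intro mult_left_mono) auto
  then show ?thesis using c by (simp add: mult.assoc)
qed

end
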